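(* For every $D>0$ there exists $\delta=\delta(D)>0$ such that the following holds. For any integers $K,N\geq 8$ and any measurable quasi-periodic function $G$ on $\mathbb{R}^2$ with $|G|\geq D$ almost everywhere, there exists a measurable set $S\subseteq[0,1]^2$ of Lebesgue measure at least $1/(NK)$ such that every $(x,y)\in S$ satisfies $$|G(x+1/K,y)-G(x,y)|\geq\delta\quad\text{or}\quad |G(x,y+1/N)-G(x,y)|\geq\delta.$$
   Context: A function $G$ on $\mathbb{R}^2$ is quasi-periodic if $G(x,y+1)=G(x,y)$ and $G(x+1,y)=e^{2\pi i y}G(x,y)$ for all $(x,y)\in\mathbb{R}^2$. *)

theory Defs
  imports "HOL-Analysis.Analysis"
begin

definition quasi_periodic :: "(real \<times> real \<Rightarrow> complex) \<Rightarrow> bool" where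
  "quasi_periodic G \<longleftrightarrow>
     (\<forall>x y. G (x, y + 1) = G (x, y) \<and>
            G (x + 1, y) = exp (2 * pi * \<i> * complex_of_real y) * G (x, y))"

end

theory Submission
  imports Defs
begin

lemma cis_eq_1_int: assumes "cis s = 1" shows "\<exists>n::int. s = 2*pi*n"
proof -
  have "exp (\<i> * complex_of_real s) = 1" using assms by (simp add: cis_conv_exp)
  then obtain n::int where "Im (\<i> * complex_of_real s) = of_int (2*n) * pi" using exp_eq_1 by blast
  then show ?thesis by (intro exI[of _ n]) simp
qed

lemma small_2pi_mult: assumes "cis s = 1" "\<bar>s\<bar> < 2*pi" shows "s = 0"
proof -
  obtain n::int where n: "s = 2*pi*n" using cis_eq_1_int assms(1) by blast
  have "\<bar>real_of_int n\<bar> < 1" using assms(2) n pi_gt_zero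
    by (simp add: abs_mult)
  then have "n = 0" by linarith
  then show ?thesis using n by simp
qed

lemma arg_small:
  fixes a b :: complex
  assumes "a \<noteq> 0" "norm (b - a) < norm a / 2"
  shows "\<bar>Arg (b / a)\<bar> \<le> pi/4"
proof -
  define z where "z = b / a"
  have "z - 1 = (b - a) / a" unfolding z_def using assms(1) by (simp add: diff_divide_distrib)
  then have "norm (z - 1) = norm (b - a) / norm a" by (simp add: norm_divide)
  moreover have "norm a > 0" using assms(1) by simp
  ultimately have z1: "norm (z - 1) < 1/2" using assms(2)
    by (simp add: divide_less_eq mult.commute)
  have "\<bar>Re (z - 1)\<bar> < 1/2" "\<bar>Im (z - 1)\<bar> < 1/2"
    using z1 abs_Re_le_cmod[of "z-1"] abs_Im_le_cmod[of "z-1"] by linarith+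
  then have "\<bar>Re z - 1\<bar> < 1/2" and im: "\<bar>Im z\<bar> < 1/2" by simp_all
  then have re: "Re z > 1/2" unfolding abs_less_iff by linarith
  have rp: "Re z > 0" using re by linarith
  have i1: "Im z \<le> Re z" "- Re z \<le> Im z" using re im unfolding abs_less_iff by linarith+
  have "-1 \<le> Im z / Re z" using i1(2) rp by (simp add: pos_le_divide_eq)
  moreover have "Im z / Re z \<le> 1" using i1(1) rp by (simp add: pos_divide_le_eq)
  ultimately have "-1 \<le> Im z / Re z" "Im z / Re z \<le> 1" by simp_all
  then have "arctan (-1) \<le> arctan (Im z / Re z)" "arctan (Im z / Re z) \<le> arctan 1"
    by (simp_all only: arctan_le_iff)
  then have a1: "- (pi/4) \<le> arctan (Im z / Re z)" "arctan (Im z / Re z) \<le> pi/4"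
    by (simp_all only: arctan_minus arctan_one)
  have "Arg z = arctan (Im z / Re z)" using re by (intro arg_conv_arctan) simp
  then have "\<bar>Arg z\<bar> \<le> pi/4" using a1 by arith
  then show ?thesis unfolding z_def .
qed


lemma core:
  fixes g :: "nat \<Rightarrow> nat \<Rightarrow> complex" and K N :: nat and c :: real
  assumes N8: "N \<ge> 8" and K1: "K \<ge> 1"
    and nz: "\<And>j k. j \<le> K \<Longrightarrow> k \<le> N \<Longrightarrow> g j k \<noteq> 0"
    and hor: "\<And>j k. j < K \<Longrightarrow> k \<le> N \<Longrightarrow> \<bar>Arg (g (Suc j) k / g j k)\<bar> \<le> pi/4"
    and ver: "\<And>j k. j < K \<Longrightarrow> k < N \<Longrightarrow> \<bar>Arg (g j (Suc k) / g j k)\<bar> \<le> pi/4"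
    and per: "\<And>j. j \<le> K \<Longrightarrow> g j N = g j 0"
    and tw: "\<And>k. k \<le> N \<Longrightarrow> g K k = cis (c + 2*pi*k/N) * g 0 k"
  shows False
proof -
  define h where "h j k = Arg (g (Suc j) k / g j k)" for j k
  define w where "w j k = (if j = K then Arg (g 0 (Suc k) / g 0 k) + 2*pi/N
                           else Arg (g j (Suc k) / g j k))" for j k
  have Npos: "real N > 0" using N8 by simp
  have twopiN: "2*pi/N \<le> pi/4" using N8 pi_gt_zero by (simp add: field_simps)
  have twopiN0: "2*pi/N \<ge> 0" using pi_gt_zero by simp
  have H: "cis (h j k) = sgn (g (Suc j) k / g j k) \<and> \<bar>h j k\<bar> \<le> pi/4" if "j < K" "k \<le> N" for j k
    using hor[OF that] nz that unfolding h_def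
    by (subst cis_Arg) (auto simp: )
  have W: "cis (w j k) = sgn (g j (Suc k) / g j k) \<and> \<bar>w j k\<bar> \<le> pi/2" if "j \<le> K" "k < N" for j k
  proof (cases "j = K")
    case True
    have a: "\<bar>Arg (g 0 (Suc k) / g 0 k)\<bar> \<le> pi/4" using ver[of 0 k] K1 that by simp
    have nz0: "g 0 k \<noteq> 0" "g 0 (Suc k) \<noteq> 0" using nz[of 0 k] nz[of 0 "Suc k"] that by auto
    have cc: "cis (c + 2*pi*real (Suc k)/N) = cis (2*pi/N) * cis (c + 2*pi*k/N)"
      by (simp add: cis_mult add_divide_distrib distrib_left algebra_simps)
    have "g K (Suc k) / g K k = cis (2*pi/N) * (g 0 (Suc k) / g 0 k)"
      using tw[of k] tw[of "Suc k"] that nz0 cc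
      by (simp add: field_simps)
    then have "sgn (g j (Suc k) / g j k) = cis (2*pi/N) * sgn (g 0 (Suc k) / g 0 k)" using True
      by (simp add: sgn_mult)
    also have "\<dots> = cis (2*pi/N) * cis (Arg (g 0 (Suc k) / g 0 k))"
      using nz0 by (subst cis_Arg) simp_all
    also have "\<dots> = cis (Arg (g 0 (Suc k) / g 0 k) + 2*pi/N)"
      by (simp only: cis_mult add.commute)
    also have "\<dots> = cis (w j k)" unfolding w_def using True by simp
    finally have "cis (w j k) = sgn (g j (Suc k) / g j k)" by simp
    moreover have "\<bar>w j k\<bar> \<le> pi/2"
    proof -
      have eq: "w j k = Arg (g 0 (Suc k) / g 0 k) + 2*pi/N" using True unfolding w_def by simp
      show ?thesis unfolding eq using a twopiN twopiN0 by arith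
    qed
    ultimately show ?thesis by simp
  next
    case False
    have eq: "w j k = Arg (g j (Suc k) / g j k)" using False unfolding w_def by simp
    have j: "j < K" using False that by simp
    have q: "g j (Suc k) / g j k \<noteq> 0" using nz[of j k] nz[of j "Suc k"] that j by simp
    show ?thesis unfolding eq using ver[OF j that(2)] cis_Arg[OF q] pi_gt_zero by simp
  qed
  have sq: "h j k + w (Suc j) k - h j (Suc k) - w j k = 0" if "j < K" "k < N" for j k
  proof (rule small_2pi_mult)
    have n: "g j k \<noteq> 0" "g (Suc j) k \<noteq> 0" "g (Suc j) (Suc k) \<noteq> 0" "g j (Suc k) \<noteq> 0"
      using nz that by auto
    have "cis (h j k + w (Suc j) k - h j (Suc k) - w j k)
        = cis (h j k) * cis (w (Suc j) k) / (cis (h j (Suc k)) * cis (w j k))"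
      by (simp add: cis_mult cis_divide algebra_simps)
    also have "\<dots> = sgn (g (Suc j) k / g j k) * sgn (g (Suc j) (Suc k) / g (Suc j) k)
        / (sgn (g (Suc j) (Suc k) / g j (Suc k)) * sgn (g j (Suc k) / g j k))"
      using H[of j k] H[of j "Suc k"] W[of "Suc j" k] W[of j k] that by simp
    also have "\<dots> = sgn ((g (Suc j) k / g j k) * (g (Suc j) (Suc k) / g (Suc j) k)
        / ((g (Suc j) (Suc k) / g j (Suc k)) * (g j (Suc k) / g j k)))"
      by (simp only: sgn_mult sgn_divide)
    also have "\<dots> = 1" using n by (simp add: field_simps)
    finally show "cis (h j k + w (Suc j) k - h j (Suc k) - w j k) = 1" .
    show "\<bar>h j k + w (Suc j) k - h j (Suc k) - w j k\<bar> < 2*pi"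
    proof -
      have "\<bar>h j k\<bar> \<le> pi/4" "\<bar>h j (Suc k)\<bar> \<le> pi/4" "\<bar>w (Suc j) k\<bar> \<le> pi/2" "\<bar>w j k\<bar> \<le> pi/2"
        using H[of j k] H[of j "Suc k"] W[of "Suc j" k] W[of j k] that by auto
      then show ?thesis using pi_gt_zero by arith
    qed
  qed
  define A where "A k = (\<Sum>j<K. h j k)" for k
  have step: "A (Suc k) = A k + 2*pi/N" if "k < N" for k
  proof -
    have "(\<Sum>j<K. h j k + w (Suc j) k - h j (Suc k) - w j k) = 0"
      using sq that by simp
    moreover have "(\<Sum>j<K. h j k + w (Suc j) k - h j (Suc k) - w j k)
       = A k - A (Suc k) + (\<Sum>j<K. w (Suc j) k - w j k)"
      unfolding A_def by (simp add: sum.distrib sum_subtractf algebra_simps)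
    moreover have "(\<Sum>j<K. w (Suc j) k - w j k) = w K k - w 0 k"
      by (rule sum_lessThan_telescope)
    moreover have "w K k - w 0 k = 2*pi/N" using K1 unfolding w_def by simp
    ultimately show ?thesis by simp
  qed
  have lin: "A k = A 0 + 2*pi*k/N" if "k \<le> N" for k
    using that
  proof (induction k)
    case 0 then show ?case by simp
  next
    case (Suc k)
    then show ?case using step[of k] by (simp add: field_simps)
  qed
  have "A N = A 0" unfolding A_def h_def using per by (intro sum.cong) auto
  with lin[of N] Npos pi_gt_zero show False by simp
qed



lemma core_G:
  fixes G :: "real \<times> real \<Rightarrow> complex" and K N :: nat and D x y :: real
  assumes qp: "quasi_periodic G" and K1: "K \<ge> 1" and N8: "N \<ge> 8" and D: "D > 0"
    and big: "\<And>j k. j < K \<Longrightarrow> k < N \<Longrightarrow> D \<le> norm (G (x + j/K, y + k/N))"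
    and goodh: "\<And>j k. j < K \<Longrightarrow> k < N \<Longrightarrow>
        norm (G (x + j/K + 1/K, y + k/N) - G (x + j/K, y + k/N)) < D/2"
    and goodv: "\<And>j k. j < K \<Longrightarrow> k < N \<Longrightarrow>
        norm (G (x + j/K, y + k/N + 1/N) - G (x + j/K, y + k/N)) < D/2"
  shows False
proof -
  have qy: "G (a, b + 1) = G (a, b)" and qx: "G (a + 1, b) = exp (2 * pi * \<i> * complex_of_real b) * G (a, b)" for a b
    using qp unfolding quasi_periodic_def by auto
  define g where "g j k = G (x + real j / real K, y + real k / real N)" for j k
  have Kp: "real K > 0" and Np: "real N > 0" using K1 N8 by auto
  have gper: "g j N = g j 0" for j
  proof -
    have "y + real N / real N = y + 1" using Np by simp
    then show ?thesis unfolding g_def using qy by simp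
  qed
  have gtw: "g K k = cis (2*pi*y + 2*pi*k/N) * g 0 k" for k
  proof -
    have "x + real K / real K = x + 1" using Kp by simp
    then have "g K k = exp (2 * pi * \<i> * complex_of_real (y + k/N)) * g 0 k"
      unfolding g_def using qx by simp
    also have "exp (2 * pi * \<i> * complex_of_real (y + k/N)) = cis (2*pi*y + 2*pi*k/N)"
      by (simp add: cis_conv_exp algebra_simps)
    finally show ?thesis .
  qed
  have gK: "norm (g K k) = norm (g 0 k)" for k using gtw by (simp add: norm_mult)
  have gbig: "D \<le> norm (g j k)" if "j \<le> K" "k \<le> N" for j k
  proof -
    have a: "D \<le> norm (g j k)" if "j < K" "k \<le> N" for j k
    proof (cases "k = N")
      case True then show ?thesis using big[of j 0] that gper[of j] K1 N8 unfolding g_def by simp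
    next
      case False then show ?thesis using big[of j k] that unfolding g_def by simp
    qed
    show ?thesis
    proof (cases "j = K")
      case True then show ?thesis using a[of 0 k] gK[of k] K1 that by simp
    next
      case False then show ?thesis using a[of j k] that by simp
    qed
  qed
  have nz: "g j k \<noteq> 0" if "j \<le> K" "k \<le> N" for j k
    using gbig[OF that] D by auto
  have sucK: "x + real (Suc j) / real K = x + j/K + 1/K" for j by (simp add: add_divide_distrib)
  have sucN: "y + real (Suc k) / real N = y + k/N + 1/N" for k by (simp add: add_divide_distrib)
  have hor: "\<bar>Arg (g (Suc j) k / g j k)\<bar> \<le> pi/4" if "j < K" "k \<le> N" for j k
  proof (rule arg_small)
    show "g j k \<noteq> 0" using nz that by simp
    have k': "g i k = g i (if k = N then 0 else k)" for i using gper by simp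
    have "norm (g (Suc j) k - g j k) < D/2"
      using goodh[of j "if k = N then 0 else k"] that N8
      unfolding k'[of j] k'[of "Suc j"] unfolding g_def sucK by auto
    also have "D/2 \<le> norm (g j k) / 2" using gbig[of j k] that by simp
    finally show "norm (g (Suc j) k - g j k) < norm (g j k) / 2" .
  qed
  have ver: "\<bar>Arg (g j (Suc k) / g j k)\<bar> \<le> pi/4" if "j < K" "k < N" for j k
  proof (rule arg_small)
    show "g j k \<noteq> 0" using nz that by simp
    have "norm (g j (Suc k) - g j k) < D/2"
      using goodv[of j k] that unfolding g_def sucN by auto
    also have "D/2 \<le> norm (g j k) / 2" using gbig[of j k] that by simp
    finally show "norm (g j (Suc k) - g j k) < norm (g j k) / 2" .
  qed
  show False
    by (rule core[OF N8 K1 nz hor ver gper gtw]) auto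
qed



lemma boxm: assumes "a > 0" "b > 0" shows "measure lebesgue (box (0::real,0::real) (a,b)) = a * b"
proof -
  have "measure lebesgue (box (0::real,0::real) (a,b)) = measure lborel (box (0::real,0::real) (a,b))"
    by simp
  also have "\<dots> = a * b" unfolding measure_lborel_box_eq using assms by (simp add: Basis_prod_def inner_prod_def)
  finally show ?thesis .
qed

lemma mem_box2: "p \<in> box (0::real,0::real) (a,b) \<longleftrightarrow> 0 < fst p \<and> fst p < a \<and> 0 < snd p \<and> snd p < b"
  by (cases p) (auto simp: mem_box Basis_prod_def inner_prod_def)

lemma cbox01: "{0..1} \<times> {0..1} = cbox (0::real,0::real) (1,1)"
  by (auto simp: mem_box Basis_prod_def inner_prod_def)

lemma cell_unique:
  fixes K j j' :: nat and a :: real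
  assumes "K > 0" "j/K < a" "a < j/K + 1/K" "j'/K < a" "a < j'/K + 1/K"
  shows "j = j'"
proof -
  have Kp: "real K > 0" using assms by simp
  have "real j < real j' + 1" "real j' < real j + 1"
    using assms Kp by (simp_all add: field_simps)
  then show ?thesis by linarith
qed

lemma le_one_aux:
  fixes K j :: nat and x :: real
  assumes "j < K" "0 < x" "x < 1/K"
  shows "0 \<le> x + j/K" "x + j/K \<le> 1"
proof -
  show "0 \<le> x + j/K" using assms by simp
  have "x + j/K \<le> 1/K + j/K" using assms by simp
  also have "\<dots> = (real j + 1)/K" by (simp add: add_divide_distrib)
  also have "\<dots> \<le> 1" using assms by (simp add: divide_le_eq_1)
  finally show "x + j/K \<le> 1" .
qed

theorem lemma3:
  fixes D :: real
  assumes "D > 0"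
  shows "\<exists>\<delta>>0. \<forall>(K::int) (N::int) (G :: real \<times> real \<Rightarrow> complex).
           K \<ge> 8 \<longrightarrow> N \<ge> 8 \<longrightarrow>
           G \<in> borel_measurable lebesgue \<longrightarrow> quasi_periodic G \<longrightarrow>
           (AE p in lebesgue. norm (G p) \<ge> D) \<longrightarrow>
           (\<exists>S. S \<in> sets lebesgue \<and> S \<subseteq> {0..1} \<times> {0..1} \<and>
                measure lebesgue S \<ge> 1 / (real_of_int N * real_of_int K) \<and>
                (\<forall>(x, y)\<in>S. norm (G (x + 1 / real_of_int K, y) - G (x, y)) \<ge> \<delta> \<or>
                             norm (G (x, y + 1 / real_of_int N) - G (x, y)) \<ge> \<delta>))"
proof (rule exI[of _ "D/2"], intro conjI allI impI)
  show "D/2 > 0" using assms by simp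
  fix Ki Ni :: int and G :: "real \<times> real \<Rightarrow> complex"
  assume K8i: "Ki \<ge> 8" and N8i: "Ni \<ge> 8" and Gm: "G \<in> borel_measurable lebesgue"
    and qp: "quasi_periodic G" and ae: "AE p in lebesgue. norm (G p) \<ge> D"
  define K where "K = nat Ki"
  define N where "N = nat Ni"
  have Kd: "Ki = int K" using K8i unfolding K_def by simp
  have Nd: "Ni = int N" using N8i unfolding N_def by simp
  have K8: "K \<ge> 8" and N8: "N \<ge> 8" using K8i N8i Kd Nd by auto
  have Kp: "real K > 0" and Np: "real N > 0" using K8 N8 by auto
  define bad where "bad p \<longleftrightarrow> norm (G (fst p + 1 / real K, snd p) - G p) \<ge> D/2 \<or>
                               norm (G (fst p, snd p + 1 / real N) - G p) \<ge> D/2" for p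
  define S where "S = ({0..1} \<times> {0..1}) \<inter> {p. bad p}"
  have trm: "(\<lambda>p. norm (G (c + 1 *\<^sub>R p) - G p)) \<in> borel_measurable lebesgue" for c
  proof -
    have "(\<lambda>p. G (c + 1 *\<^sub>R p)) \<in> borel_measurable lebesgue"
      by (rule borel_measurable_affine[OF Gm]) simp
    then show ?thesis using Gm by measurable
  qed
  have setm: "{p. D/2 \<le> norm (G (c + 1 *\<^sub>R p) - G p)} \<in> sets lebesgue" for c
  proof -
    have "{w \<in> space lebesgue. D/2 \<le> norm (G (c + 1 *\<^sub>R w) - G w)} \<in> sets lebesgue"
      using trm[of c] unfolding borel_measurable_iff_ge by blast
    then show ?thesis by simp
  qed
  have e1: "{p. D/2 \<le> norm (G (fst p + 1 / real K, snd p) - G p)}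
      = {p. D/2 \<le> norm (G ((1 / real K, 0) + 1 *\<^sub>R p) - G p)}"
    by (auto simp: add.commute)
  have e2: "{p. D/2 \<le> norm (G (fst p, snd p + 1 / real N) - G p)}
      = {p. D/2 \<le> norm (G ((0, 1 / real N) + 1 *\<^sub>R p) - G p)}"
    by (auto simp: add.commute)
  have badm: "{p. bad p} \<in> sets lebesgue"
  proof -
    have "{p. bad p} = {p. D/2 \<le> norm (G (fst p + 1 / real K, snd p) - G p)}
        \<union> {p. D/2 \<le> norm (G (fst p, snd p + 1 / real N) - G p)}"
      unfolding bad_def by auto
    then show ?thesis unfolding e1 e2 using setm by simp
  qed
  have Sf: "S \<in> lmeasurable" unfolding S_def cbox01
    by (rule fmeasurable_Int_fmeasurable[OF lmeasurable_cbox badm])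
  have G1: "S \<in> sets lebesgue" using Sf by auto
  have G2: "S \<subseteq> {0..1} \<times> {0..1}" unfolding S_def by auto
  have G3: "\<forall>(x, y)\<in>S. norm (G (x + 1 / real_of_int Ki, y) - G (x, y)) \<ge> D/2 \<or>
                   norm (G (x, y + 1 / real_of_int Ni) - G (x, y)) \<ge> D/2"
    unfolding S_def bad_def Kd Nd by auto
  define I where "I = {..<K} \<times> {..<N}"
  define t where "t i = (real (fst i) / real K, real (snd i) / real N)" for i
  define Q where "Q = box (0::real,0::real) (1 / real K, 1 / real N)"
  define cell where "cell i = (+) (t i) ` Q" for i
  define bk where "bk i = (\<lambda>p. p - t i) ` (S \<inter> cell i)" for i
  define B where "B = {p. \<not> D \<le> norm (G p)}"
  define N0 where "N0 = (\<Union>i\<in>I. (+) (- t i) ` B)"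
  have finI: "finite I" unfolding I_def by simp
  have Bn: "negligible B"
  proof -
    obtain M where M: "{x \<in> space lebesgue. \<not> D \<le> norm (G x)} \<subseteq> M" "emeasure lebesgue M = 0" "M \<in> sets lebesgue"
      using ae by (rule AE_E)
    have "M \<in> null_sets lebesgue" using M(2,3) by (rule null_setsI)
    then have "negligible M" by (simp only: negligible_iff_null_sets)
    moreover have "B \<subseteq> M" using M(1) unfolding B_def by auto
    ultimately show ?thesis by (rule negligible_subset)
  qed
  have N0n: "N0 \<in> null_sets lebesgue"
  proof -
    have "negligible N0" unfolding N0_def
    proof (rule negligible_Union)
      show "finite ((\<lambda>i. (+) (- t i) ` B) ` I)" using finI by simp
      show "negligible T" if "T \<in> (\<lambda>i. (+) (- t i) ` B) ` I" for T
        using that negligible_translation[OF Bn] by blast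
    qed
    then show ?thesis by (simp add: negligible_iff_null_sets)
  qed
  have Qs: "Q \<in> sets lebesgue" unfolding Q_def by simp
  have Ql: "Q \<in> lmeasurable" unfolding Q_def by simp
  have cellm: "cell i \<in> lmeasurable" for i unfolding cell_def by (rule measurable_translation[OF Ql])
  have Sc: "S \<inter> cell i \<in> lmeasurable" for i
    by (rule fmeasurable_Int_fmeasurable[OF Sf fmeasurableD[OF cellm]])
  have bkm: "bk i \<in> lmeasurable" for i
    unfolding bk_def by (rule measurable_translation_subtract[OF Sc])
  have cover: "Q - N0 \<subseteq> (\<Union>i\<in>I. bk i)"
  proof
    fix q assume q: "q \<in> Q - N0"
    define x where "x = fst q"
    define y where "y = snd q"
    have qxy: "q = (x, y)" unfolding x_def y_def by simp
    have x: "0 < x" "x < 1 / real K" and y: "0 < y" "y < 1 / real N"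
      using q unfolding Q_def x_def y_def by (auto simp: mem_box2)
    have big: "D \<le> norm (G (x + j/K, y + k/N))" if "j < K" "k < N" for j k
    proof (rule ccontr)
      assume c: "\<not> D \<le> norm (G (x + j/K, y + k/N))"
      have "q = - t (j,k) + (x + j/K, y + k/N)" unfolding qxy t_def by simp
      then have "q \<in> (+) (- t (j,k)) ` B" using c unfolding B_def by blast
      then have "q \<in> N0" unfolding N0_def I_def using that by blast
      then show False using q by simp
    qed
    show "q \<in> (\<Union>i\<in>I. bk i)"
    proof (rule ccontr)
      assume nq: "q \<notin> (\<Union>i\<in>I. bk i)"
      have nb: "\<not> bad (x + j/K, y + k/N)" if "j < K" "k < N" for j k
      proof
        assume b: "bad (x + j/K, y + k/N)"
        define p where "p = (x + j/K, y + k/N)"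
        have "p \<in> {0..1} \<times> {0..1}" unfolding p_def using le_one_aux[OF that(1) x] le_one_aux[OF that(2) y] by auto
        then have pS: "p \<in> S" unfolding S_def using b p_def by simp
        have "p = t (j,k) + q" unfolding p_def t_def qxy by simp
        then have "p \<in> cell (j,k)" unfolding cell_def using q by blast
        then have "q \<in> bk (j,k)" unfolding bk_def using pS \<open>p = t (j,k) + q\<close>
          by (auto intro!: image_eqI[of _ _ p])
        then show False using nq that unfolding I_def by blast
      qed
      show False
      proof (rule core_G[OF qp _ N8 assms big])
        show "1 \<le> K" using K8 by simp
      next
        fix j k assume "j < K" "k < N"
        then show "norm (G (x + j/K + 1/K, y + k/N) - G (x + j/K, y + k/N)) < D/2"
          using nb[of j k] unfolding bad_def by simp
      next
        fix j k assume "j < K" "k < N"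
        then show "norm (G (x + j/K, y + k/N + 1/N) - G (x + j/K, y + k/N)) < D/2"
          using nb[of j k] unfolding bad_def by simp
      qed
    qed
  qed
  have disj: "pairwise (\<lambda>i i'. disjnt (S \<inter> cell i) (S \<inter> cell i')) I"
  proof (rule pairwiseI)
    fix i i' assume "i \<in> I" "i' \<in> I" "i \<noteq> i'"
    show "disjnt (S \<inter> cell i) (S \<inter> cell i')"
    unfolding disjnt_def
      proof (rule ccontr)
        assume "(S \<inter> cell i) \<inter> (S \<inter> cell i') \<noteq> {}"
        then obtain p where "p \<in> cell i" "p \<in> cell i'" by blast
        then obtain q q' where qq: "q \<in> Q" "q' \<in> Q" "p = t i + q" "p = t i' + q'"
          unfolding cell_def by blast
        have f: "fst p = real (fst i)/K + fst q" "fst p = real (fst i')/K + fst q'"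
             "snd p = real (snd i)/N + snd q" "snd p = real (snd i')/N + snd q'"
          using arg_cong[OF qq(3), of fst] arg_cong[OF qq(4), of fst]
                arg_cong[OF qq(3), of snd] arg_cong[OF qq(4), of snd]
          unfolding t_def by (simp_all only: fst_add snd_add fst_conv snd_conv)
        have b: "0 < fst q" "fst q < 1/K" "0 < snd q" "snd q < 1/N"
             "0 < fst q'" "fst q' < 1/K" "0 < snd q'" "snd q' < 1/N"
          using qq(1,2) unfolding Q_def mem_box2 by auto
        have "fst i = fst i'"
          by (rule cell_unique[of K _ "fst p"]) (use f b K8 in linarith)+
        moreover have "snd i = snd i'"
          by (rule cell_unique[of N _ "snd p"]) (use f b N8 in linarith)+
        ultimately show False using \<open>i \<noteq> i'\<close> by (simp add: prod_eq_iff)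
      qed
  qed
  have "1 / (real K * real N) = measure lebesgue Q"
    unfolding Q_def using boxm[of "1/real K" "1/real N"] Kp Np by simp
  also have "\<dots> = measure lebesgue (Q - N0)" using Qs N0n by (simp add: measure_Diff_null_set)
  also have "\<dots> \<le> measure lebesgue (\<Union>i\<in>I. bk i)"
    by (rule measure_mono_fmeasurable[OF cover]) (auto intro!: sets.Diff Qs null_setsD2[OF N0n] fmeasurable.finite_UN finI bkm)
  also have "\<dots> \<le> (\<Sum>i\<in>I. measure lebesgue (bk i))"
    by (rule measure_UNION_le[OF finI]) (rule fmeasurableD[OF bkm])
  also have "\<dots> = (\<Sum>i\<in>I. measure lebesgue (S \<inter> cell i))"
    unfolding bk_def by (simp add: measure_translation_subtract)
  also have "\<dots> = measure lebesgue (\<Union>i\<in>I. S \<inter> cell i)"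
    by (rule measure_UNION'[OF finI Sc disj, symmetric])
  also have "\<dots> \<le> measure lebesgue S"
  proof (rule measure_mono_fmeasurable)
    show "(\<Union>i\<in>I. S \<inter> cell i) \<in> sets lebesgue"
      using finI by (intro sets.finite_UN fmeasurableD[OF Sc]) auto
  qed (use Sf in auto)
  finally have "measure lebesgue S \<ge> 1 / (real_of_int Ni * real_of_int Ki)"
    unfolding Kd Nd by (simp add: mult.commute)
  with G1 G2 G3 show "\<exists>S. S \<in> sets lebesgue \<and> S \<subseteq> {0..1} \<times> {0..1} \<and>
                measure lebesgue S \<ge> 1 / (real_of_int Ni * real_of_int Ki) \<and>
                (\<forall>(x, y)\<in>S. norm (G (x + 1 / real_of_int Ki, y) - G (x, y)) \<ge> D/2 \<or>
                             norm (G (x, y + 1 / real_of_int Ni) - G (x, y)) \<ge> D/2)" by blast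
qed

end
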